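(* For integers $n\ge1$, $m\ge0$, $$\operatorname{Tr}(J_nB_n^{2m})=n\sum_{\pi\in\mathcal{D}_m}w(\pi),$$ where $\mathcal{D}_m$ is the set of Dyck paths of length $2m$ (lattice paths from height $0$ to height $0$ with $m$ up steps $(1,1)$ and $m$ down steps $(1,-1)$, never going below height $0$), and the weight $w(\pi)$ is the product of the weights of its steps: an up step from height $k-1$ to height $k$ has weight $a_{k-1}=\frac{n-k}{2k-1}$ and a down step from height $k$ to height $k-1$ has weight $b_k=\frac{n+k}{2k+1}$ ($k\ge1$). The empty path has weight $1$.
   Context: $J_n$ is the $n\times n$ all-ones matrix, and $B_n=i\,M$ where $M$ is the $n\times n$ matrix with zero diagonal, entries $1$ above and $-1$ below the diagonal. *)

theory Defs
  imports "Jordan_Normal_Form.Matrix" Complex_Main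
begin

definition J_mat :: "nat \<Rightarrow> complex mat" where
  "J_mat n = mat n n (\<lambda>_. 1)"

definition M_mat :: "nat \<Rightarrow> complex mat" where
  "M_mat n = mat n n (\<lambda>(i,j). if i < j then 1 else if j < i then -1 else 0)"

definition B_mat :: "nat \<Rightarrow> complex mat" where
  "B_mat n = \<i> \<cdot>\<^sub>m M_mat n"

definition mat_trace :: "'a::comm_monoid_add mat \<Rightarrow> 'a" where
  "mat_trace A = (\<Sum>i<dim_row A. A $$ (i,i))"

definition path_height :: "bool list \<Rightarrow> int" where
  "path_height p = (\<Sum>s\<leftarrow>p. if s then 1 else -1)"

definition dyck_paths :: "nat \<Rightarrow> bool list set" where
  "dyck_paths m = {p. length p = 2 * m \<and> length (filter id p) = m \<and>
                      (\<forall>k\<le>length p. path_height (take k p) \<ge> 0)}"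

text \<open>Step weights: up step from height k-1 to k has weight a_{k-1} = (n-k)/(2k-1);
  down step from height k to k-1 has weight b_k = (n+k)/(2k+1).\<close>
definition up_wt :: "nat \<Rightarrow> int \<Rightarrow> real" where
  "up_wt n k = (real n - real_of_int k) / (2 * real_of_int k - 1)"

definition down_wt :: "nat \<Rightarrow> int \<Rightarrow> real" where
  "down_wt n k = (real n + real_of_int k) / (2 * real_of_int k + 1)"

fun path_wt_from :: "nat \<Rightarrow> int \<Rightarrow> bool list \<Rightarrow> real" where
  "path_wt_from n h [] = 1"
| "path_wt_from n h (True # p) = up_wt n (h + 1) * path_wt_from n (h + 1) p"
| "path_wt_from n h (False # p) = down_wt n h * path_wt_from n (h - 1) p"

definition path_wt :: "nat \<Rightarrow> bool list \<Rightarrow> real" where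
  "path_wt n p = path_wt_from n 0 p"

end

theory Submission
  imports Defs
begin


lemma path_height_Cons: "path_height (s # p) = (if s then 1 else -1) + path_height p"
  by (simp add: path_height_def)

lemma path_height_Nil[simp]: "path_height [] = 0"
  by (simp add: path_height_def)

lemma path_height_count: "path_height p = 2 * int (length (filter id p)) - int (length p)"
  by (induction p) (auto simp: path_height_Cons)

definition SP :: "nat \<Rightarrow> int \<Rightarrow> bool list set" where
  "SP N h = {p. length p = N \<and> h + path_height p = 0 \<and>
                 (\<forall>k\<le>length p. h + path_height (take k p) \<ge> 0)}"

lemma SP_finite: "finite (SP N h)"
proof -
  have "SP N h \<subseteq> {xs. set xs \<subseteq> UNIV \<and> length xs = N}" by (auto simp: SP_def)
  moreover have "finite {xs :: bool list. set xs \<subseteq> UNIV \<and> length xs = N}"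
    by (rule finite_lists_length_eq) simp
  ultimately show ?thesis by (rule finite_subset)
qed

lemma SP_neg: "h < 0 \<Longrightarrow> SP N h = {}"
  by (auto simp: SP_def dest: spec[of _ 0])

lemma SP_0: "SP 0 h = (if h = 0 then {[]} else {})"
  by (auto simp: SP_def)

lemma SP_Suc: assumes "h \<ge> 0"
  shows "SP (Suc N) h = Cons True ` SP N (h+1) \<union> Cons False ` SP N (h-1)"
proof (rule Set.set_eqI)
  fix p
  show "p \<in> SP (Suc N) h \<longleftrightarrow> p \<in> Cons True ` SP N (h+1) \<union> Cons False ` SP N (h-1)"
  proof (cases p)
    case Nil then show ?thesis by (auto simp: SP_def)
  next
    case (Cons s q)
    have take_eq: "(\<forall>k\<le>Suc (length q). h + path_height (take k (s # q)) \<ge> 0) \<longleftrightarrow>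
        (\<forall>k\<le>length q. h + (if s then 1 else -1) + path_height (take k q) \<ge> 0)"
    proof
      assume A: "\<forall>k\<le>Suc (length q). h + path_height (take k (s # q)) \<ge> 0"
      show "\<forall>k\<le>length q. h + (if s then 1 else -1) + path_height (take k q) \<ge> 0"
      proof (intro allI impI)
        fix k assume "k \<le> length q"
        then have "h + path_height (take (Suc k) (s # q)) \<ge> 0" using A by auto
        then show "h + (if s then 1 else -1) + path_height (take k q) \<ge> 0"
          by (simp add: path_height_Cons)
      qed
    next
      assume A: "\<forall>k\<le>length q. h + (if s then 1 else -1) + path_height (take k q) \<ge> 0"
      show "\<forall>k\<le>Suc (length q). h + path_height (take k (s # q)) \<ge> 0"
      proof (intro allI impI)
        fix k assume k: "k \<le> Suc (length q)"
        show "h + path_height (take k (s # q)) \<ge> 0"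
        proof (cases k)
          case 0 then show ?thesis using assms by simp
        next
          case (Suc k') then show ?thesis using A k by (simp add: path_height_Cons add.assoc)
        qed
      qed
    qed
    show ?thesis using take_eq Cons
      by (cases s) (auto simp: SP_def path_height_Cons algebra_simps)
  qed
qed

definition FP :: "nat \<Rightarrow> nat \<Rightarrow> int \<Rightarrow> real" where
  "FP n N h = (\<Sum>p\<in>SP N h. path_wt_from n h p)"

lemma FP_neg: "h < 0 \<Longrightarrow> FP n N h = 0"
  by (simp add: FP_def SP_neg)

lemma FP_0: "FP n 0 h = (if h = 0 then 1 else 0)"
  by (simp add: FP_def SP_0)

lemma FP_Suc: assumes "h \<ge> 0"
  shows "FP n (Suc N) h = up_wt n (h+1) * FP n N (h+1) + down_wt n h * FP n N (h-1)"
proof -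
  have "FP n (Suc N) h = (\<Sum>p\<in>Cons True ` SP N (h+1). path_wt_from n h p)
         + (\<Sum>p\<in>Cons False ` SP N (h-1). path_wt_from n h p)"
    unfolding FP_def SP_Suc[OF assms]
    by (rule sum.union_disjoint) (auto simp: SP_finite)
  also have "\<dots> = up_wt n (h+1) * FP n N (h+1) + down_wt n h * FP n N (h-1)"
    by (simp add: sum.reindex FP_def sum_distrib_left)
  finally show ?thesis .
qed

lemma dyck_SP: "dyck_paths m = SP (2*m) 0"
  by (auto simp: dyck_paths_def SP_def path_height_count)

lemma dyck_sum: "(\<Sum>p\<in>dyck_paths m. path_wt n p) = FP n (2*m) 0"
  by (simp add: dyck_SP FP_def path_wt_def)



definition Qp :: "nat \<Rightarrow> real \<Rightarrow> real" where
  "Qp j h = (\<Prod>t<j. (h - real t) * (h + 1 + real t))"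
definition Dp :: "nat \<Rightarrow> nat \<Rightarrow> real" where
  "Dp n j = (\<Prod>t<j. real (Suc t) * (real n - 1 - real t))"
definition cf :: "nat \<Rightarrow> real \<Rightarrow> nat \<Rightarrow> real" where
  "cf n h j = (-1)^j * Qp j h / Dp n j"
definition wv :: "nat \<Rightarrow> real \<Rightarrow> nat \<Rightarrow> real" where
  "wv n h i = (\<Sum>j<n. cf n h j * real (i choose j))"
definition Mop :: "nat \<Rightarrow> (nat \<Rightarrow> real) \<Rightarrow> nat \<Rightarrow> real" where
  "Mop n f i = (\<Sum>j\<in>{i<..<n}. f j) - (\<Sum>j<i. f j)"
definition aa :: "nat \<Rightarrow> real \<Rightarrow> real" where "aa n h = (real n - h - 1) / (2*h+1)"
definition bb :: "nat \<Rightarrow> real \<Rightarrow> real" where "bb n h = (real n + h) / (2*h+1)"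
definition Sh :: "nat \<Rightarrow> real \<Rightarrow> real" where
  "Sh n h = (\<Sum>j<n. cf n h j * real (n choose Suc j))"

lemma Qp_0[simp]: "Qp 0 h = 1" by (simp add: Qp_def)
lemma Qp_Suc: "Qp (Suc j) h = Qp j h * ((h - real j) * (h + 1 + real j))"
  by (simp add: Qp_def)
lemma Qp_up: "Qp (Suc j) (h+1) = Qp j h * ((h + 1 + real j) * (h + 2 + real j))"
proof (induction j)
  case 0 then show ?case by (simp add: Qp_Suc algebra_simps)
next
  case (Suc j)
  have "Qp (Suc (Suc j)) (h+1) = Qp (Suc j) (h+1) * ((h + 1 - real (Suc j)) * (h + 1 + 1 + real (Suc j)))"
    by (rule Qp_Suc)
  also have "\<dots> = Qp j h * ((h + 1 + real j) * (h + 2 + real j)) * ((h - real j) * (h + 3 + real j))"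
    using Suc by (simp add: algebra_simps)
  also have "\<dots> = Qp (Suc j) h * ((h + 1 + real (Suc j)) * (h + 2 + real (Suc j)))"
    by (simp add: Qp_Suc algebra_simps)
  finally show ?case .
qed
lemma Qp_dn: "Qp (Suc j) (h-1) = Qp j h * ((h - real j) * (h - 1 - real j))"
proof (induction j)
  case 0 then show ?case by (simp add: Qp_Suc algebra_simps)
next
  case (Suc j)
  have "Qp (Suc (Suc j)) (h-1) = Qp (Suc j) (h-1) * ((h - 1 - real (Suc j)) * (h - 1 + 1 + real (Suc j)))"
    by (rule Qp_Suc)
  also have "\<dots> = Qp j h * ((h - real j) * (h - 1 - real j)) * ((h - 2 - real j) * (h + 1 + real j))"
    by (simp only: Suc.IH) (simp add: algebra_simps)
  also have "\<dots> = Qp (Suc j) h * ((h - real (Suc j)) * (h - 1 - real (Suc j)))"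
    by (simp add: Qp_Suc algebra_simps)
  finally show ?case .
qed
lemma Qp_zero: "h * (h + 1) = 0 \<Longrightarrow> Qp (Suc j) h = 0"
  by (induction j) (auto simp: Qp_Suc)
lemma Qp_nat_zero: "k < j \<Longrightarrow> Qp j (real k) = 0"
  unfolding Qp_def by (rule prod_zero) auto

lemma Dp_0[simp]: "Dp n 0 = 1" by (simp add: Dp_def)
lemma Dp_Suc: "Dp n (Suc j) = Dp n j * (real (Suc j) * (real n - 1 - real j))"
  by (simp add: Dp_def)
lemma Dp_nz: "j < n \<Longrightarrow> Dp n j \<noteq> 0"
  unfolding Dp_def by (subst prod_zero_iff) auto

lemma cf_0[simp]: "cf n h 0 = 1" by (simp add: cf_def)

lemma coef:
  assumes h: "2*h+1 \<noteq> 0" and j: "Suc j < n"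
  shows "-(cf n h (Suc j) + 2 * cf n h j) = aa n h * cf n (h+1) (Suc j) - bb n h * cf n (h-1) (Suc j)"
proof -
  have d: "Dp n j \<noteq> 0" using j by (intro Dp_nz) simp
  have e: "real (Suc j) * (real n - 1 - real j) \<noteq> 0" using j by auto
  have quad: "(2*h+1) * ((h - real j) * (h + 1 + real j) - 2 * (real j + 1) * (real n - 1 - real j))
     = - (real n - h - 1) * ((h + 1 + real j) * (h + 2 + real j)) + (real n + h) * ((h - real j) * (h - 1 - real j))"
    by (simp add: algebra_simps)
  define q where "q = Qp j h"
  define sg where "sg = ((-1::real)^j)"
  define d where "d = Dp n j"
  define e where "e = real (Suc j) * (real n - 1 - real j)"
  have c1: "cf n h (Suc j) = - sg * q / (d*e) * ((h - real j) * (h + 1 + real j))"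
    unfolding cf_def Qp_Suc Dp_Suc q_def sg_def d_def e_def by simp
  have c2: "cf n h j = sg * q / (d*e) * e"
    unfolding cf_def q_def sg_def d_def using e_def e by simp
  have c3: "cf n (h+1) (Suc j) = - sg * q / (d*e) * ((h + 1 + real j) * (h + 2 + real j))"
    unfolding cf_def Qp_up Dp_Suc q_def sg_def d_def e_def by simp
  have c4: "cf n (h-1) (Suc j) = - sg * q / (d*e) * ((h - real j) * (h - 1 - real j))"
    unfolding cf_def Qp_dn Dp_Suc q_def sg_def d_def e_def by simp
  have gen: "\<And>A B X Y c. c \<noteq> (0::real) \<Longrightarrow> - (A / c) * X + (B / c) * Y = (- A * X + B * Y) / c"
    by (simp add: field_simps)
  have quad': "(h - real j) * (h + 1 + real j) - 2 * e
     = - aa n h * ((h + 1 + real j) * (h + 2 + real j)) + bb n h * ((h - real j) * (h - 1 - real j))"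
  proof -
    have "- aa n h * ((h + 1 + real j) * (h + 2 + real j)) + bb n h * ((h - real j) * (h - 1 - real j))
       = (- (real n - h - 1) * ((h + 1 + real j) * (h + 2 + real j)) + (real n + h) * ((h - real j) * (h - 1 - real j))) / (2*h+1)"
      unfolding aa_def bb_def by (rule gen[OF h])
    also have "\<dots> = ((2*h+1) * ((h - real j) * (h + 1 + real j) - 2 * e)) / (2*h+1)"
      unfolding quad[symmetric] e_def by (simp add: algebra_simps)
    also have "\<dots> = (h - real j) * (h + 1 + real j) - 2 * e" using h by simp
    finally show ?thesis by simp
  qed
  show ?thesis unfolding c1 c2 c3 c4
  proof -
    have "-(- sg * q / (d*e) * ((h - real j) * (h + 1 + real j)) + 2 * (sg * q / (d*e) * e))
        = sg * q / (d*e) * ((h - real j) * (h + 1 + real j) - 2 * e)" by (simp add: algebra_simps)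
    also have "\<dots> = sg * q / (d*e) * (- aa n h * ((h + 1 + real j) * (h + 2 + real j)) + bb n h * ((h - real j) * (h - 1 - real j)))"
      by (simp only: quad')
    also have "\<dots> = aa n h * (- sg * q / (d*e) * ((h + 1 + real j) * (h + 2 + real j))) - bb n h * (- sg * q / (d*e) * ((h - real j) * (h - 1 - real j)))"
      by (simp add: algebra_simps)
    finally show "-(- sg * q / (d*e) * ((h - real j) * (h + 1 + real j)) + 2 * (sg * q / (d*e) * e))
        = aa n h * (- sg * q / (d*e) * ((h + 1 + real j) * (h + 2 + real j))) - bb n h * (- sg * q / (d*e) * ((h - real j) * (h - 1 - real j)))" .
  qed
qed

lemma sum_choose_below: "(\<Sum>k<i. real (k choose j)) = real (i choose Suc j)"
proof (cases i)
  case 0 then show ?thesis by simp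
next
  case (Suc i')
  have "(\<Sum>k<i. k choose j) = (\<Sum>k\<le>i'. k choose j)" using Suc lessThan_Suc_atMost by simp
  also have "\<dots> = i choose Suc j" using Suc sum_choose_upper by simp
  finally show ?thesis by (metis of_nat_sum)
qed

lemma sum_split_above: "i < n \<Longrightarrow> (\<Sum>k\<in>{i<..<n}. f k) = (\<Sum>k<n. f k) - (\<Sum>k<Suc i. f k) " for f :: "nat \<Rightarrow> 'a::ab_group_add"
proof -
  assume i: "i < n"
  have "{..<n} = {..<Suc i} \<union> {i<..<n}" using i by auto
  then have "(\<Sum>k<n. f k) = sum f ({..<Suc i} \<union> {i<..<n})" by (simp only:)
  also have "\<dots> = (\<Sum>k<Suc i. f k) + (\<Sum>k\<in>{i<..<n}. f k)"
    by (rule sum.union_disjoint) auto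
  finally have "(\<Sum>k<n. f k) = (\<Sum>k<Suc i. f k) + (\<Sum>k\<in>{i<..<n}. f k)" .
  then show ?thesis by simp
qed

lemma Mop_choose: "i < n \<Longrightarrow> Mop n (\<lambda>k. real (k choose j)) i
   = real (n choose Suc j) - real (Suc i choose Suc j) - real (i choose Suc j)"
  unfolding Mop_def by (simp only: sum_split_above sum_choose_below)

lemma Mop_lin: "Mop n (\<lambda>k. \<Sum>j<N. c j * g j k) i = (\<Sum>j<N. c j * Mop n (g j) i)"
  unfolding Mop_def by (simp add: sum_distrib_left sum_subtractf right_diff_distrib sum.swap[of _ "{..<N}"])

lemma Mop_wv:
  assumes h: "2*h+1 \<noteq> 0" and i: "i < n"
  shows "Mop n (wv n h) i = Sh n h + aa n h * wv n (h+1) i - bb n h * wv n (h-1) i"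
proof -
  obtain n' where n: "n = Suc n'" using i by (cases n) auto
  have "Mop n (wv n h) i = (\<Sum>j<n. cf n h j * Mop n (\<lambda>k. real (k choose j)) i)"
    unfolding wv_def[abs_def] by (rule Mop_lin)
  also have "\<dots> = (\<Sum>j<n. cf n h j * (real (n choose Suc j) - real (i choose j) - 2 * real (i choose Suc j)))"
    by (intro sum.cong refl) (simp add: Mop_choose[OF i])
  also have "\<dots> = (\<Sum>j<n. cf n h j * real (n choose Suc j) - cf n h j * real (i choose j) - 2 * (cf n h j * real (i choose Suc j)))"
    by (simp add: algebra_simps)
  also have "\<dots> = Sh n h - (\<Sum>j<n. cf n h j * real (i choose j)) - 2 * (\<Sum>j<n. cf n h j * real (i choose Suc j))"
    unfolding Sh_def sum_subtractf sum_distrib_left by simp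
  also have "(\<Sum>j<n. cf n h j * real (i choose j)) = 1 + (\<Sum>j<n'. cf n h (Suc j) * real (i choose Suc j))"
    unfolding n sum.lessThan_Suc_shift by simp
  also have "(\<Sum>j<n. cf n h j * real (i choose Suc j)) = (\<Sum>j<n'. cf n h j * real (i choose Suc j))"
    using i unfolding n by simp
  finally have L: "Mop n (wv n h) i = Sh n h - 1 - (\<Sum>j<n'. (cf n h (Suc j) + 2 * cf n h j) * real (i choose Suc j))"
    by (simp add: sum.distrib sum_distrib_left algebra_simps)
  have W: "wv n g i = 1 + (\<Sum>j<n'. cf n g (Suc j) * real (i choose Suc j))" for g
    unfolding wv_def n sum.lessThan_Suc_shift by simp
  have ab: "aa n h - bb n h = -1"
  proof -
    have "aa n h - bb n h = ((real n - h - 1) - (real n + h))/(2*h+1)"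
      unfolding aa_def bb_def by (rule diff_divide_distrib[symmetric])
    also have "\<dots> = -(2*h+1)/(2*h+1)" by (simp add: algebra_simps)
    also have "\<dots> = -1" using h by (metis divide_self minus_divide_left)
    finally show ?thesis .
  qed
  have "(\<Sum>j<n'. (cf n h (Suc j) + 2 * cf n h j) * real (i choose Suc j))
     = (\<Sum>j<n'. (bb n h * cf n (h-1) (Suc j) - aa n h * cf n (h+1) (Suc j)) * real (i choose Suc j))"
  proof (intro sum.cong refl)
    fix j assume "j \<in> {..<n'}"
    then have "Suc j < n" using n by simp
    from coef[OF h this] show "(cf n h (Suc j) + 2 * cf n h j) * real (i choose Suc j)
       = (bb n h * cf n (h-1) (Suc j) - aa n h * cf n (h+1) (Suc j)) * real (i choose Suc j)"
      by (simp add: algebra_simps)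
  qed
  then show ?thesis unfolding L W using ab
    by (simp add: sum_subtractf sum_distrib_left algebra_simps)
qed

lemma choose_ratio: "Suc j < n \<Longrightarrow> (n choose Suc (Suc j)) * Suc (Suc j) = (n choose Suc j) * (n - Suc j)"
  by (metis binomial_absorb_comp binomial_absorption mult.commute)

lemma choose_Dp: "j < n \<Longrightarrow> real (n choose Suc j) * (fact j * fact (Suc j)) = real n * Dp n j"
proof (induction j)
  case 0 then show ?case by simp
next
  case (Suc j)
  then have IH: "real (n choose Suc j) * (fact j * fact (Suc j)) = real n * Dp n j" by simp
  have r: "real (n choose Suc (Suc j)) * real (Suc (Suc j)) = real (n choose Suc j) * (real n - 1 - real j)"
  proof -
    have "real ((n choose Suc (Suc j)) * Suc (Suc j)) = real ((n choose Suc j) * (n - Suc j))"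
      using choose_ratio[OF Suc.prems] by simp
    moreover have "real (n - Suc j) = real n - 1 - real j" using Suc.prems by (simp add: of_nat_diff)
    ultimately show ?thesis by (simp only: of_nat_mult)
  qed
  have "real (n choose Suc (Suc j)) * (fact (Suc j) * fact (Suc (Suc j)))
      = (real (n choose Suc (Suc j)) * real (Suc (Suc j))) * (fact (Suc j) * fact (Suc j))"
    by (simp only: fact_Suc[of "Suc j"]) (simp add: algebra_simps)
  also have "\<dots> = (real (n choose Suc j) * (fact j * fact (Suc j))) * (real (Suc j) * (real n - 1 - real j))"
    unfolding r by (simp only: fact_Suc[of j]) (simp add: algebra_simps)
  also have "\<dots> = real n * Dp n (Suc j)" unfolding IH Dp_Suc by (simp add: algebra_simps)
  finally show ?case .
qed

lemma Sh_zero: assumes k: "1 \<le> k" "k < n" shows "Sh n (real k) = 0"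
proof -
  define h where "h = real k"
  have c: "h * (h + 1) \<noteq> 0" using k unfolding h_def by simp
  define T where "T j = (-1)^j * Qp j h / (fact j * fact (Suc j))" for j
  define G where "G j = -((-1)^j * Qp j h * real j / (h*(h+1) * (fact j)^2))" for j
  have trm: "cf n h j * real (n choose Suc j) = real n * T j" if j: "j < n" for j
  proof -
    have "real (n choose Suc j) = real n * Dp n j / (fact j * fact (Suc j))"
    proof -
      have nz: "(fact j * fact (Suc j) :: real) \<noteq> 0" by simp
      show ?thesis using eq_divide_imp[OF nz choose_Dp[OF j]] .
    qed
    then show ?thesis unfolding cf_def T_def using Dp_nz[OF j] by simp
  qed
  have tele: "T j = G (Suc j) - G j" for j
  proof -
    define sg where "sg = ((-1::real)^j)"
    define q where "q = Qp j h"
    define f where "f = (fact j :: real)"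
    have f: "f \<noteq> 0" unfolding f_def by simp
    define r where "r = real j + 1"
    have j1: "r \<noteq> 0" unfolding r_def by simp
    have fs: "(fact (Suc j) :: real) = r * f" unfolding f_def r_def by (simp add: algebra_simps)
    have rs: "real (Suc j) = r" unfolding r_def by simp
    have jr: "real j = r - 1" unfolding r_def by simp
    have aux1: "\<And>s q X r c (f::real). r \<noteq> 0 \<Longrightarrow> c \<noteq> 0 \<Longrightarrow> f \<noteq> 0 \<Longrightarrow>
        -(-s * (q*X) * r / (c * (r*f)^2)) = s*q/(c*r*f^2) * X" by (simp add: field_simps power2_eq_square)
    have aux2: "\<And>s q r c (f::real). r \<noteq> 0 \<Longrightarrow> c \<noteq> 0 \<Longrightarrow> f \<noteq> 0 \<Longrightarrow>
        -(s * q * (r - 1) / (c * f^2)) = s*q/(c*r*f^2) * (- (r - 1) * r)" by (simp add: field_simps power2_eq_square)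
    have aux3: "\<And>s q r c (f::real). r \<noteq> 0 \<Longrightarrow> c \<noteq> 0 \<Longrightarrow> f \<noteq> 0 \<Longrightarrow>
        s * q / (f * (r * f)) = s*q/(c*r*f^2) * c" by (simp add: field_simps power2_eq_square)
    have G1: "G (Suc j) = sg * q / (h*(h+1) * r * f^2) * ((h - real j) * (h + 1 + real j))"
      unfolding G_def Qp_Suc fs power_Suc q_def[symmetric] sg_def[symmetric] rs
      using aux1[OF j1 c f, of sg] by simp
    have G0: "G j = sg * q / (h*(h+1) * r * f^2) * (- real j * (real j + 1))"
      unfolding G_def q_def[symmetric] sg_def[symmetric] f_def[symmetric] jr
      using aux2[OF j1 c f, of sg q] by (simp add: r_def)
    have T0: "T j = sg * q / (h*(h+1) * r * f^2) * (h * (h+1))"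
      unfolding T_def fs q_def[symmetric] sg_def[symmetric] f_def[symmetric]
      using aux3[OF j1 c f, of sg q] by simp
    have e: "(h - real j) * (h + 1 + real j) - (- real j * (real j + 1)) = h*(h+1)"
      by (simp add: algebra_simps)
    show ?thesis unfolding G1 G0 T0 right_diff_distrib[symmetric] e ..
  qed
  have "Sh n h = (\<Sum>j<n. real n * T j)" unfolding Sh_def by (intro sum.cong refl) (simp add: trm)
  also have "\<dots> = real n * (G n - G 0)" by (simp add: sum_distrib_left[symmetric] tele sum_lessThan_telescope)
  also have "G n = 0" unfolding G_def h_def using Qp_nat_zero[OF k(2)] by simp
  also have "G 0 = 0" unfolding G_def by simp
  finally show ?thesis unfolding h_def by simp
qed

lemma wv_const: assumes "h * (h + 1) = 0" "0 < n" shows "wv n h i = 1"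
proof -
  obtain n' where n: "n = Suc n'" using assms by (cases n) auto
  show ?thesis unfolding wv_def n sum.lessThan_Suc_shift using Qp_zero[OF assms(1)]
    by (simp add: cf_def)
qed

lemma Sh_0: "0 < n \<Longrightarrow> Sh n 0 = real n"
proof -
  assume "0 < n"
  then obtain n' where n: "n = Suc n'" by (cases n) auto
  show ?thesis unfolding Sh_def n sum.lessThan_Suc_shift using Qp_zero[of 0]
    by (simp add: cf_def)
qed



definition uv :: "nat \<Rightarrow> int \<Rightarrow> complex vec" where
  "uv n h = (if h < 0 then 0\<^sub>v n else vec n (\<lambda>i. \<i> ^ nat h * complex_of_real (wv n (real (nat h)) i)))"

lemma uv_carrier[simp]: "uv n h \<in> carrier_vec n"
  by (simp add: uv_def)

lemma uv_dim[simp]: "dim_vec (uv n h) = n"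
  by (simp add: uv_def)

lemma B_carrier[simp]: "B_mat n \<in> carrier_mat n n"
  by (simp add: B_mat_def M_mat_def)

lemma B_dims[simp]: "dim_row (B_mat n) = n" "dim_col (B_mat n) = n"
  by (simp_all add: B_mat_def M_mat_def)

lemma M_mult: assumes i: "i < n"
  shows "(M_mat n *\<^sub>v vec n (\<lambda>k. c * complex_of_real (f k))) $ i = c * complex_of_real (Mop n f i)"
proof -
  define g where "g k = (if i < k then 1 else if k < i then -1 else 0) * (c * complex_of_real (f k))" for k
  have "(M_mat n *\<^sub>v vec n (\<lambda>k. c * complex_of_real (f k))) $ i = (\<Sum>k<n. g k)"
    using i by (simp add: M_mat_def scalar_prod_def g_def lessThan_atLeast0)
  also have "\<dots> = (\<Sum>k<Suc i. g k) + (\<Sum>k\<in>{i<..<n}. g k)"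
    using sum_split_above[OF i, of g] by simp
  also have "(\<Sum>k<Suc i. g k) = (\<Sum>k<i. - (c * complex_of_real (f k)))"
    by (simp add: g_def)
  also have "(\<Sum>k\<in>{i<..<n}. g k) = (\<Sum>k\<in>{i<..<n}. c * complex_of_real (f k))"
    by (intro sum.cong refl) (simp add: g_def)
  finally show ?thesis
    by (simp add: Mop_def sum_distrib_left sum_negf algebra_simps)
qed

lemma B_mult_entry: assumes i: "i < n" and v: "v \<in> carrier_vec n"
  shows "(B_mat n *\<^sub>v v) $ i = \<i> * (M_mat n *\<^sub>v v) $ i"
  using i v by (simp add: B_mat_def M_mat_def scalar_prod_def sum_distrib_left algebra_simps)

lemma B_uv: assumes h: "0 \<le> h" "h < int n"
  shows "B_mat n *\<^sub>v uv n h = complex_of_real (up_wt n (h+1)) \<cdot>\<^sub>v uv n (h+1)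
                              + complex_of_real (down_wt n h) \<cdot>\<^sub>v uv n (h-1)"
proof (rule eq_vecI)
  obtain k where k: "h = int k" using h by (metis nonneg_eq_int)
  have kn: "k < n" using h k by simp
  have n0: "0 < n" using kn by simp
  show "dim_vec (B_mat n *\<^sub>v uv n h) = dim_vec (complex_of_real (up_wt n (h+1)) \<cdot>\<^sub>v uv n (h+1)
                              + complex_of_real (down_wt n h) \<cdot>\<^sub>v uv n (h-1))"
    by simp
  fix i assume "i < dim_vec (complex_of_real (up_wt n (h+1)) \<cdot>\<^sub>v uv n (h+1)
                              + complex_of_real (down_wt n h) \<cdot>\<^sub>v uv n (h-1))"
  then have i: "i < n" by simp
  have hk1: "2 * real k + 1 \<noteq> 0" by simp
  have L: "(B_mat n *\<^sub>v uv n h) $ i = \<i> * \<i> ^ k * complex_of_real (Mop n (wv n (real k)) i)"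
    unfolding B_mult_entry[OF i uv_carrier] using M_mult[OF i] by (simp add: uv_def k)
  have up: "up_wt n (h+1) = aa n (real k)" unfolding up_wt_def aa_def k by (simp add: algebra_simps)
  have dn: "down_wt n h = bb n (real k)" unfolding down_wt_def bb_def k by (simp add: algebra_simps)
  show "(B_mat n *\<^sub>v uv n h) $ i = (complex_of_real (up_wt n (h+1)) \<cdot>\<^sub>v uv n (h+1)
                              + complex_of_real (down_wt n h) \<cdot>\<^sub>v uv n (h-1)) $ i"
  proof (cases k)
    case 0
    have "Mop n (wv n (real k)) i = aa n 0 * wv n 1 i"
      using Mop_wv[OF hk1 i] Sh_0[OF n0] wv_const[of "-1" n i] n0 0 by (simp add: bb_def)
    then show ?thesis unfolding L using i 0 k up by (simp add: uv_def aa_def)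
  next
    case (Suc k')
    have mop: "Mop n (wv n (real k)) i = aa n (real k) * wv n (real k + 1) i - bb n (real k) * wv n (real k - 1) i"
      using Mop_wv[OF hk1 i] Sh_zero[of k n] Suc kn by simp
    moreover have "nat (h + 1) = Suc k" "nat (h - 1) = k'" using k Suc by auto
    moreover have "\<i> * \<i> ^ k = - (\<i> ^ k')" using Suc by simp
    moreover have "\<i> ^ Suc k = - (\<i> ^ k')" using Suc by simp
    ultimately show ?thesis unfolding L mop using i k Suc up dn by (simp add: uv_def algebra_simps)
  qed
qed

definition gs :: "nat \<Rightarrow> nat \<Rightarrow> int \<Rightarrow> complex" where
  "gs n N h = (\<Sum>i<n. (B_mat n ^\<^sub>m N *\<^sub>v uv n h) $ i)"

lemma gs_Suc: assumes h: "0 \<le> h" "h < int n"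
  shows "gs n (Suc N) h = complex_of_real (up_wt n (h+1)) * gs n N (h+1)
                          + complex_of_real (down_wt n h) * gs n N (h-1)"
proof -
  have P: "B_mat n ^\<^sub>m N \<in> carrier_mat n n" by simp
  have "B_mat n ^\<^sub>m Suc N *\<^sub>v uv n h = B_mat n ^\<^sub>m N *\<^sub>v (B_mat n *\<^sub>v uv n h)"
    by (simp del: pow_mat.simps add: pow_mat.simps(2)[of "B_mat n" N] assoc_mult_mat_vec[OF P B_carrier uv_carrier])
  also have "\<dots> = complex_of_real (up_wt n (h+1)) \<cdot>\<^sub>v (B_mat n ^\<^sub>m N *\<^sub>v uv n (h+1))
                 + complex_of_real (down_wt n h) \<cdot>\<^sub>v (B_mat n ^\<^sub>m N *\<^sub>v uv n (h-1))"
    unfolding B_uv[OF h]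
    by (simp add: mult_add_distrib_mat_vec[OF P] mult_mat_vec[OF P])
  finally show ?thesis unfolding gs_def
    by (simp add: sum.distrib sum_distrib_left)
qed

lemma gs_neg: "h < 0 \<Longrightarrow> gs n N h = 0"
  unfolding gs_def uv_def by simp

lemma sum_wv: "(\<Sum>i<n. wv n h i) = Sh n h"
  unfolding wv_def Sh_def
  by (simp add: sum.swap[of _ "{..<n}" "{..<n}"] sum_distrib_left[symmetric] sum_choose_below)

lemma gs_0: assumes h: "0 \<le> h" "h < int n"
  shows "gs n 0 h = (if h = 0 then of_nat n else 0)"
proof -
  obtain k where k: "h = int k" using h by (metis nonneg_eq_int)
  have "gs n 0 h = (\<Sum>i<n. \<i> ^ k * complex_of_real (wv n (real k) i))"
    unfolding gs_def uv_def k by simp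
  also have "\<dots> = \<i> ^ k * complex_of_real (Sh n (real k))"
    by (simp add: sum_distrib_left[symmetric] sum_wv[symmetric])
  finally show ?thesis using Sh_zero[of k n] Sh_0[of n] h k by auto
qed

lemma gs_FP: "h < int n \<Longrightarrow> gs n N h = complex_of_real (real n * FP n N h)"
proof (induction N arbitrary: h)
  case 0
  show ?case
  proof (cases "h < 0")
    case True then show ?thesis by (simp add: gs_neg FP_neg)
  next
    case False then show ?thesis using gs_0[of h n] 0 by (simp add: FP_0)
  qed
next
  case (Suc N)
  show ?case
  proof (cases "h < 0")
    case True then show ?thesis by (simp add: gs_neg FP_neg)
  next
    case False
    then have h: "0 \<le> h" by simp
    have t2: "gs n N (h-1) = complex_of_real (real n * FP n N (h-1))" using Suc by simp
    have t1: "complex_of_real (up_wt n (h+1)) * gs n N (h+1) = complex_of_real (up_wt n (h+1) * (real n * FP n N (h+1)))"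
    proof (cases "h + 1 < int n")
      case True then show ?thesis using Suc.IH by simp
    next
      case False
      then have "h + 1 = int n" using Suc.prems by simp
      then have "up_wt n (h+1) = 0" by (simp add: up_wt_def)
      then show ?thesis by simp
    qed
    show ?thesis unfolding gs_Suc[OF h Suc.prems] FP_Suc[OF h] t1 t2
      by (simp add: algebra_simps)
  qed
qed

lemma uv_0: "0 < n \<Longrightarrow> uv n 0 = vec n (\<lambda>_. 1)"
  unfolding uv_def using wv_const[of 0 n] by auto

lemma trace_gs: assumes n: "0 < n" shows "mat_trace (J_mat n * B_mat n ^\<^sub>m N) = gs n N 0"
proof -
  have P: "B_mat n ^\<^sub>m N \<in> carrier_mat n n" by simp
  have "mat_trace (J_mat n * B_mat n ^\<^sub>m N) = (\<Sum>i<n. \<Sum>k<n. (B_mat n ^\<^sub>m N) $$ (k,i))"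
    unfolding mat_trace_def using P by (simp add: J_mat_def scalar_prod_def lessThan_atLeast0)
  also have "\<dots> = (\<Sum>k<n. \<Sum>i<n. (B_mat n ^\<^sub>m N) $$ (k,i))" by (rule sum.swap)
  also have "\<dots> = gs n N 0"
    unfolding gs_def uv_0[OF n] using P by (simp add: scalar_prod_def lessThan_atLeast0)
  finally show ?thesis .
qed


theorem theorem5p2:
  fixes n m :: nat
  assumes "n \<ge> 1"
  shows "mat_trace (J_mat n * B_mat n ^\<^sub>m (2 * m))
           = complex_of_real (real n * (\<Sum>p\<in>dyck_paths m. path_wt n p))"
proof -
  have n: "0 < n" using assms by simp
  show ?thesis unfolding trace_gs[OF n] dyck_sum using gs_FP[of 0 n "2*m"] n by simp
qed

end
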